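(* Let $\alpha=0.8$, let $x\sim\mathcal N(0,1)$ and let $b\in\{0,1\}$ be independent of $x$ with $\mathbb P(b=1)=\alpha$. For $w>0$ let $\tau_w>0$ be the unique number with $\mathbb P(|b-xw|<\tau_w)=1-\alpha$, let $A_w=\{|b-xw|<\tau_w\}$, and define the population TORRENT update $$F(w)=\frac{\mathbb E[b\,x\,\mathbb I(A_w)]}{\mathbb E[x^2\,\mathbb I(A_w)]}.$$ Then there exists $w>1/2$ with $F(w)=w$; i.e., TORRENT in the infinite-sample limit, for the model $y=xw^*+b$ with $w^*=0$, has a fixed point at distance greater than $1/2$ from $w^*$.
   Context: TORRENT is the alternating procedure that, given the current $w$, keeps the $(1-\alpha)$ fraction of points with the smallest absolute residuals $|y_i-x_iw|$ and refits least squares on them; $F$ is its $n\to\infty$ limit for one-dimensional data $y_i=x_iw^*+b_i$ with $w^*=0$, $x_i$ i.i.d. $\mathcal N(0,1)$ and an $\alpha$ fraction of $b_i$ equal to $1$ (the rest $0$), independent of the $x_i$. $\mathbb I$ is the indicator. *)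

theory Defs
  imports "HOL-Probability.Probability"
begin

definition torrent_alpha :: real where
  "torrent_alpha = 0.8"

text \<open>Joint law of (x, b), with b encoded as a boolean (True means b = 1).\<close>
definition torrent_M :: "(real \<times> bool) measure" where
  "torrent_M = density lborel std_normal_density \<Otimes>\<^sub>M measure_pmf (bernoulli_pmf torrent_alpha)"

definition bval :: "bool \<Rightarrow> real" where
  "bval c = (if c then 1 else 0)"

definition torrent_event :: "real \<Rightarrow> real \<Rightarrow> (real \<times> bool) set" where
  "torrent_event w \<tau> = {p \<in> space torrent_M. \<bar>bval (snd p) - fst p * w\<bar> < \<tau>}"

definition torrent_tau :: "real \<Rightarrow> real" where
  "torrent_tau w = (THE \<tau>. \<tau> > 0 \<and> measure torrent_M (torrent_event w \<tau>) = 1 - torrent_alpha)"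

definition torrent_A :: "real \<Rightarrow> (real \<times> bool) set" where
  "torrent_A w = torrent_event w (torrent_tau w)"

definition torrent_F :: "real \<Rightarrow> real" where
  "torrent_F w =
     (\<integral>p. bval (snd p) * fst p * indicator (torrent_A w) p \<partial>torrent_M) /
     (\<integral>p. (fst p)\<^sup>2 * indicator (torrent_A w) p \<partial>torrent_M)"

end

theory Submission
  imports Defs
begin


definition gco :: "(nat \<Rightarrow> nat) \<Rightarrow> (nat \<Rightarrow> nat) \<Rightarrow> nat \<Rightarrow> real" where
  "gco rn rd k = (\<Prod>j<k. real (rn j) / real (rd j))"

fun SL :: "nat \<Rightarrow> nat \<Rightarrow> (nat\<Rightarrow>nat) \<Rightarrow> (nat\<Rightarrow>nat) \<Rightarrow> nat \<Rightarrow> nat \<Rightarrow> nat \<Rightarrow> nat \<Rightarrow> int" where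
  "SL P Q rn rd ml mh k 0 = 0"
| "SL P Q rn rd ml mh k (Suc n) =
     (if even k then int ml else - int mh) + SL P Q rn rd (ml * P * rn k div (Q * rd k)) ((mh * P * rn k + (Q * rd k - 1)) div (Q * rd k)) (Suc k) n"

fun SU :: "nat \<Rightarrow> nat \<Rightarrow> (nat\<Rightarrow>nat) \<Rightarrow> (nat\<Rightarrow>nat) \<Rightarrow> nat \<Rightarrow> nat \<Rightarrow> nat \<Rightarrow> nat \<Rightarrow> int" where
  "SU P Q rn rd ml mh k 0 = 0"
| "SU P Q rn rd ml mh k (Suc n) =
     (if even k then int mh else - int ml) + SU P Q rn rd (ml * P * rn k div (Q * rd k)) ((mh * P * rn k + (Q * rd k - 1)) div (Q * rd k)) (Suc k) n"

lemma SL_numeral: "SL P Q rn rd ml mh k (numeral n) =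
     (if even k then int ml else - int mh) + SL P Q rn rd (ml * P * rn k div (Q * rd k)) ((mh * P * rn k + (Q * rd k - 1)) div (Q * rd k)) (Suc k) (pred_numeral n)"
  by (simp add: numeral_eq_Suc)

lemma SU_numeral: "SU P Q rn rd ml mh k (numeral n) =
     (if even k then int mh else - int ml) + SU P Q rn rd (ml * P * rn k div (Q * rd k)) ((mh * P * rn k + (Q * rd k - 1)) div (Q * rd k)) (Suc k) (pred_numeral n)"
  by (simp add: numeral_eq_Suc)

lemma ceil_div_ge: "(b::nat) > 0 \<Longrightarrow> real a / real b \<le> real ((a + (b - 1)) div b)"
proof -
  assume b: "b > 0"
  define q where "q = (a + (b - 1)) div b"
  have "q * b + (a + (b - 1)) mod b = a + (b - 1)" unfolding q_def by simp
  moreover have "(a + (b - 1)) mod b < b" using b by simp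
  ultimately have "a \<le> q * b" by linarith
  hence "real a \<le> real q * real b" by (metis of_nat_le_iff of_nat_mult)
  thus ?thesis using b by (simp add: divide_le_eq q_def)
qed

lemma floor_div_le: "real ((a::nat) div b) \<le> real a / real b"
proof (cases "b = 0")
  case False
  have "(a div b) * b \<le> a" by simp
  hence "real (a div b) * real b \<le> real a" by (metis of_nat_le_iff of_nat_mult)
  thus ?thesis using False by (simp add: le_divide_eq)
qed simp

lemma gco_Suc: "gco rn rd (Suc k) = gco rn rd k * (real (rn k) / real (rd k))"
  by (simp add: gco_def)

lemma SLU_correct:
  assumes pos: "\<And>j. rd j > 0" and Q: "Q > 0"
  shows "real ml \<le> D * (real P / real Q)^k * gco rn rd k \<Longrightarrow> D * (real P / real Q)^k * gco rn rd k \<le> real mh \<Longrightarrow>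
    real_of_int (SL P Q rn rd ml mh k n) \<le> D * (\<Sum>j\<in>{k..<k+n}. (-1)^j * (real P / real Q)^j * gco rn rd j)
    \<and> D * (\<Sum>j\<in>{k..<k+n}. (-1)^j * (real P / real Q)^j * gco rn rd j) \<le> real_of_int (SU P Q rn rd ml mh k n)"
proof (induction n arbitrary: ml mh k)
  case 0
  then show ?case by simp
next
  case (Suc n)
  define y where "y = real P / real Q"
  define t where "t = D * y^k * gco rn rd k"
  define ml' where "ml' = ml * P * rn k div (Q * rd k)"
  define mh' where "mh' = (mh * P * rn k + (Q * rd k - 1)) div (Q * rd k)"
  have qr: "Q * rd k > 0" using Q pos by simp
  have t1: "D * y^(Suc k) * gco rn rd (Suc k) = t * (real P * real (rn k) / (real Q * real (rd k)))"
    unfolding t_def gco_Suc y_def using Q pos[of k] by (simp add: field_simps)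
  have fr: "0 \<le> real P * real (rn k) / (real Q * real (rd k))" by simp
  have "real ml' \<le> real (ml * P * rn k) / real (Q * rd k)" unfolding ml'_def by (rule floor_div_le)
  also have "\<dots> = real ml * (real P * real (rn k) / (real Q * real (rd k)))" by simp
  also have "\<dots> \<le> t * (real P * real (rn k) / (real Q * real (rd k)))"
    using Suc.prems(1) fr unfolding t_def y_def by (intro mult_right_mono) auto
  finally have A: "real ml' \<le> D * y^(Suc k) * gco rn rd (Suc k)" using t1 by simp
  have "t * (real P * real (rn k) / (real Q * real (rd k))) \<le> real mh * (real P * real (rn k) / (real Q * real (rd k)))"
    using Suc.prems(2) fr unfolding t_def y_def by (intro mult_right_mono) auto
  hence "D * y^(Suc k) * gco rn rd (Suc k) \<le> real mh * (real P * real (rn k) / (real Q * real (rd k)))"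
    using t1 by simp
  also have "\<dots> = real (mh * P * rn k) / real (Q * rd k)" by simp
  also have "\<dots> \<le> real mh'" unfolding mh'_def by (rule ceil_div_ge[OF qr])
  finally have B: "D * y^(Suc k) * gco rn rd (Suc k) \<le> real mh'" .
  note IH = Suc.IH[of ml' "Suc k" mh', unfolded y_def[symmetric], OF A B]
  have split: "{k..<k + Suc n} = insert k {Suc k..<Suc k + n}" by auto
  have S: "(\<Sum>j\<in>{k..<k+Suc n}. (-1)^j * y^j * gco rn rd j) = (-1)^k * y^k * gco rn rd k + (\<Sum>j\<in>{Suc k..<Suc k+n}. (-1)^j * y^j * gco rn rd j)"
    unfolding split by simp
  have e1: "SL P Q rn rd ml mh k (Suc n) = (if even k then int ml else - int mh) + SL P Q rn rd ml' mh' (Suc k) n"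
    unfolding ml'_def mh'_def by simp
  have e2: "SU P Q rn rd ml mh k (Suc n) = (if even k then int mh else - int ml) + SU P Q rn rd ml' mh' (Suc k) n"
    unfolding ml'_def mh'_def by simp
  show ?case
    unfolding y_def[symmetric] e1 e2 S using IH Suc.prems unfolding y_def[symmetric]
    by (cases "even k") (auto simp: algebra_simps)
qed

lemma SLU_bounds:
  assumes pos: "\<And>j. rd j > 0" and Q: "Q > 0" and D: "D > 0"
  shows "real_of_int (SL P Q rn rd D D 0 n) / real D \<le> (\<Sum>j<n. (-1)^j * (real P / real Q)^j * gco rn rd j)"
    and "(\<Sum>j<n. (-1)^j * (real P / real Q)^j * gco rn rd j) \<le> real_of_int (SU P Q rn rd D D 0 n) / real D"
proof -
  have g0: "gco rn rd 0 = 1" by (simp add: gco_def)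
  have *: "{0..<0+n} = {..<n}" by auto
  note C = SLU_correct[where ml=D and mh=D and D="real D" and k=0 and n=n and P=P and rn=rn and rd=rd and Q=Q, OF pos Q, unfolded * g0]
  show "real_of_int (SL P Q rn rd D D 0 n) / real D \<le> (\<Sum>j<n. (-1)^j * (real P / real Q)^j * gco rn rd j)"
    using C D by (simp add: divide_le_eq mult.commute)
  show "(\<Sum>j<n. (-1)^j * (real P / real Q)^j * gco rn rd j) \<le> real_of_int (SU P Q rn rd D D 0 n) / real D"
    using C D by (simp add: le_divide_eq mult.commute)
qed


definition "rnI (k::nat) = ( 2*k+1::nat)"
definition "rdI (k::nat) = ( 2*(2*k+3)*(k+1)::nat)"
definition "rnX (k::nat) = ( 2*k+3::nat)"
definition "rdX (k::nat) = ( 2*(2*k+5)*(k+1)::nat)"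
definition "rnT (k::nat) = (1::nat)"
definition "rdT (k::nat) = ( 2*(k+1)::nat)"

lemma cancel_mid: "(m::real) \<noteq> 0 \<Longrightarrow> c / (a * m * f) * (m / g) = c / (a * f * g)"
  by (simp add: divide_simps)
lemma cancel_mid2: "(m::real) \<noteq> 0 \<Longrightarrow> c * (m * y) / (a * m * f) = c * y / (a * f)"
  by (simp add: divide_simps)

lemma gco_I: "gco rnI rdI k = 1 / ((2::real)^k * (2*real k+1) * fact k)"
proof (induction k)
  case (Suc k)
  have p: "(2*real k+1) \<noteq> 0" by linarith
  have e: "real (rnI k) = 2*real k+1" "real (rdI k) = 2*(2*real k+3)*(real k+1)"
    unfolding rnI_def rdI_def of_nat_mult of_nat_add by simp_all
  have "gco rnI rdI (Suc k) = 1 / (2^k * (2*real k+1) * fact k) * ((2*real k+1) / (2*(2*real k+3)*(real k+1)))"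
    using Suc.IH by (simp only: gco_Suc e)
  also have "\<dots> = 1 / (2^k * fact k * (2*(2*real k+3)*(real k+1)))"
    by (rule cancel_mid) (use p in simp)
  also have "2^k * fact k * (2*(2*real k+3)*(real k+1)) = 2^Suc k * (2*real (Suc k)+1) * fact (Suc k)"
    by (simp add: fact_Suc; algebra)
  finally show ?case by simp
qed (simp add: gco_def)

lemma gco_X: "gco rnX rdX k = 3 / ((2::real)^k * (2*real k+3) * fact k)"
proof (induction k)
  case (Suc k)
  have p: "(2*real k+3) \<noteq> 0" by linarith
  have e: "real (rnX k) = 2*real k+3" "real (rdX k) = 2*(2*real k+5)*(real k+1)"
    unfolding rnX_def rdX_def of_nat_mult of_nat_add by simp_all
  have "gco rnX rdX (Suc k) = 3 / (2^k * (2*real k+3) * fact k) * ((2*real k+3) / (2*(2*real k+5)*(real k+1)))"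
    using Suc.IH by (simp only: gco_Suc e)
  also have "\<dots> = 3 / (2^k * fact k * (2*(2*real k+5)*(real k+1)))"
    by (rule cancel_mid) (use p in simp)
  also have "2^k * fact k * (2*(2*real k+5)*(real k+1)) = 2^Suc k * (2*real (Suc k)+3) * fact (Suc k)"
    by (simp add: fact_Suc; algebra)
  finally show ?case by simp
qed (simp add: gco_def)

lemma gco_T: "gco rnT rdT k = 1 / ((2::real)^k * fact k)"
proof (induction k)
  case (Suc k)
  have p: "(real k+1)>0" by auto
  have "gco rnT rdT (Suc k) = 1 / (2^k * fact k) * (1 / (2*(real k+1)))"
    unfolding gco_Suc Suc.IH by (simp add: rnT_def rdT_def)
  also have "\<dots> = 1 / (2^Suc k * fact (Suc k))"
    using p by (simp add: divide_simps; simp add: algebra_simps)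
  finally show ?case by simp
qed (simp add: gco_def)

definition ee :: "real \<Rightarrow> real" where "ee x = exp (-(x^2)/2)"
definition T :: "nat \<Rightarrow> real \<Rightarrow> real" where "T n x = (\<Sum>k<n. (-1)^k * (x^2)^k / ((2::real)^k * fact k))"
definition FI :: "nat \<Rightarrow> real \<Rightarrow> real" where "FI n x = (\<Sum>k<n. (-1)^k * x^(2*k+1) / ((2::real)^k * (2*real k+1) * fact k))"
definition FX :: "nat \<Rightarrow> real \<Rightarrow> real" where "FX n x = (\<Sum>k<n. (-1)^k * x^(2*k+3) / ((2::real)^k * (2*real k+3) * fact k))"

lemma T_series: "T n x = (\<Sum>k<n. (-1)^k * (x^2)^k * gco rnT rdT k)"
  unfolding T_def gco_T by simp

lemma FI_series: "FI n x = x * (\<Sum>k<n. (-1)^k * (x^2)^k * gco rnI rdI k)"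
  unfolding FI_def gco_I sum_distrib_left
  by (rule sum.cong) (auto simp: power_mult[symmetric] power_add field_simps)

lemma FX_series: "FX n x = x^3 / 3 * (\<Sum>k<n. (-1)^k * (x^2)^k * gco rnX rdX k)"
  unfolding FX_def gco_X sum_distrib_left
  by (rule sum.cong) (auto simp: power_mult[symmetric] power_add field_simps)

lemma sq_frac: "real (p^2) / real (q^2) = (real p / real q)^2"
  by (simp add: power_divide)

lemma T_lo: "q > 0 \<Longrightarrow> D > 0 \<Longrightarrow> real_of_int (SL (p^2) (q^2) rnT rdT D D 0 n) / real D \<le> T n (real p / real q)"
  using SLU_bounds(1)[of rdT "q^2" D "p^2" rnT n] unfolding T_series sq_frac by (simp add: rdT_def)
lemma T_hi: "q > 0 \<Longrightarrow> D > 0 \<Longrightarrow> T n (real p / real q) \<le> real_of_int (SU (p^2) (q^2) rnT rdT D D 0 n) / real D"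
  using SLU_bounds(2)[of rdT "q^2" D "p^2" rnT n] unfolding T_series sq_frac by (simp add: rdT_def)
lemma FI_lo: "q > 0 \<Longrightarrow> D > 0 \<Longrightarrow> real p / real q * (real_of_int (SL (p^2) (q^2) rnI rdI D D 0 n) / real D) \<le> FI n (real p / real q)"
  using SLU_bounds(1)[of rdI "q^2" D "p^2" rnI n] unfolding FI_series sq_frac
  by (intro mult_left_mono) (auto simp: rdI_def)
lemma FI_hi: "q > 0 \<Longrightarrow> D > 0 \<Longrightarrow> FI n (real p / real q) \<le> real p / real q * (real_of_int (SU (p^2) (q^2) rnI rdI D D 0 n) / real D)"
  using SLU_bounds(2)[of rdI "q^2" D "p^2" rnI n] unfolding FI_series sq_frac
  by (intro mult_left_mono) (auto simp: rdI_def)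
lemma FX_lo: "q > 0 \<Longrightarrow> D > 0 \<Longrightarrow> (real p / real q)^3 / 3 * (real_of_int (SL (p^2) (q^2) rnX rdX D D 0 n) / real D) \<le> FX n (real p / real q)"
  using SLU_bounds(1)[of rdX "q^2" D "p^2" rnX n] unfolding FX_series sq_frac
  by (intro mult_left_mono) (auto simp: rdX_def)
lemma FX_hi: "q > 0 \<Longrightarrow> D > 0 \<Longrightarrow> FX n (real p / real q) \<le> (real p / real q)^3 / 3 * (real_of_int (SU (p^2) (q^2) rnX rdX D D 0 n) / real D)"
  using SLU_bounds(2)[of rdX "q^2" D "p^2" rnX n] unfolding FX_series sq_frac
  by (intro mult_left_mono) (auto simp: rdX_def)

lemma T_exp: "T n x = (\<Sum>k<n. (-(x^2)/2)^k / fact k)"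
  unfolding T_def by (rule sum.cong) (auto simp: power_divide power_minus')

lemma T_le_ee: "even n \<Longrightarrow> T n x \<le> ee x"
proof -
  assume n: "even n"
  obtain t where t: "exp (-(x^2)/2) = (\<Sum>m<n. (-(x^2)/2)^m / fact m) + exp t / fact n * (-(x^2)/2)^n"
    using Maclaurin_exp_le[of "-(x^2)/2" n] by auto
  have "0 \<le> exp t / fact n * (-(x^2)/2)^n" using n by (simp add: zero_le_even_power)
  thus ?thesis unfolding ee_def T_exp t by simp
qed

lemma ee_le_T: "odd n \<Longrightarrow> ee x \<le> T n x"
proof -
  assume n: "odd n"
  obtain t where t: "exp (-(x^2)/2) = (\<Sum>m<n. (-(x^2)/2)^m / fact m) + exp t / fact n * (-(x^2)/2)^n"
    using Maclaurin_exp_le[of "-(x^2)/2" n] by auto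
  have "(-(x^2)/2)^n = - ((x^2/2)^n)" using n by (simp add: power_minus_odd)
  hence "exp t / fact n * (-(x^2)/2)^n \<le> 0" by simp
  thus ?thesis unfolding ee_def T_exp t by simp
qed

lemma FI_deriv: "(FI n has_real_derivative T n x) (at x within S)"
proof -
  have "((\<lambda>x. (-1)^k * x^(2*k+1) / ((2::real)^k * (2*real k+1) * fact k)) has_real_derivative
          (-1)^k * (x^2)^k / ((2::real)^k * fact k)) (at x within S)" for k
  proof -
    have "((\<lambda>x. (-1)^k * x^(2*k+1) / ((2::real)^k * (2*real k+1) * fact k)) has_real_derivative
          (-1)^k * (real (2*k+1) * x^(2*k+1 - Suc 0)) / ((2::real)^k * (2*real k+1) * fact k)) (at x within S)"
      by (intro DERIV_cdivide DERIV_cmult DERIV_pow)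
    moreover have "(-1)^k * (real (2*k+1) * x^(2*k+1 - Suc 0)) / ((2::real)^k * (2*real k+1) * fact k) = (-1)^k * (x^2)^k / ((2::real)^k * fact k)"
    proof -
      have p: "(2*real k+1) \<noteq> 0" by linarith
      have "x^(2*k+1 - Suc 0) = (x^2)^k" by (simp add: power_mult[symmetric])
      moreover have "real (2*k+1) = 2*real k+1" by simp
      moreover have "(-1)^k * ((2*real k+1) * (x^2)^k) / ((2::real)^k * (2*real k+1) * fact k) = (-1)^k * (x^2)^k / ((2::real)^k * fact k)"
        by (rule cancel_mid2) (use p in simp)
      ultimately show ?thesis by (simp only:)
    qed
    ultimately show ?thesis by (rule DERIV_cong)
  qed
  thus ?thesis unfolding FI_def T_def by (intro DERIV_sum) auto
qed

lemma FX_deriv: "(FX n has_real_derivative x^2 * T n x) (at x within S)"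
proof -
  have "((\<lambda>x. (-1)^k * x^(2*k+3) / ((2::real)^k * (2*real k+3) * fact k)) has_real_derivative
          x^2 * ((-1)^k * (x^2)^k / ((2::real)^k * fact k))) (at x within S)" for k
  proof -
    have "((\<lambda>x. (-1)^k * x^(2*k+3) / ((2::real)^k * (2*real k+3) * fact k)) has_real_derivative
          (-1)^k * (real (2*k+3) * x^(2*k+3 - Suc 0)) / ((2::real)^k * (2*real k+3) * fact k)) (at x within S)"
      by (intro DERIV_cdivide DERIV_cmult DERIV_pow)
    moreover have "(-1)^k * (real (2*k+3) * x^(2*k+3 - Suc 0)) / ((2::real)^k * (2*real k+3) * fact k) = x^2 * ((-1)^k * (x^2)^k / ((2::real)^k * fact k))"
    proof -
      have p: "(2*real k+3) \<noteq> 0" by linarith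
      have "x^(2*k+3 - Suc 0) = x^2 * (x^2)^k" by (simp add: power_mult[symmetric] power_add[symmetric])
      moreover have "real (2*k+3) = 2*real k+3" by simp
      moreover have "(-1)^k * ((2*real k+3) * (x^2 * (x^2)^k)) / ((2::real)^k * (2*real k+3) * fact k) = (-1)^k * (x^2 * (x^2)^k) / ((2::real)^k * fact k)"
        by (rule cancel_mid2) (use p in simp)
      ultimately show ?thesis by (simp only:) (simp add: field_simps)
    qed
    ultimately show ?thesis by (rule DERIV_cong)
  qed
  thus ?thesis unfolding FX_def T_def sum_distrib_left by (intro DERIV_sum) auto
qed

lemma T_integral: "l \<le> u \<Longrightarrow> (T n has_integral (FI n u - FI n l)) {l..u}"
  by (rule fundamental_theorem_of_calculus) (auto simp: has_real_derivative_iff_has_vector_derivative[symmetric] FI_deriv)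
lemma XT_integral: "l \<le> u \<Longrightarrow> ((\<lambda>x. x^2 * T n x) has_integral (FX n u - FX n l)) {l..u}"
  by (rule fundamental_theorem_of_calculus) (auto simp: has_real_derivative_iff_has_vector_derivative[symmetric] FX_deriv)

lemma cont_ee: "continuous_on S ee"
  unfolding ee_def by (intro continuous_intros) auto

lemma ee_int: "(ee has_integral integral {l..u} ee) {l..u}"
  by (intro integrable_integral integrable_continuous_interval cont_ee)
lemma xee_int: "((\<lambda>x. x^2 * ee x) has_integral integral {l..u} (\<lambda>x. x^2 * ee x)) {l..u}"
  by (intro integrable_integral integrable_continuous_interval continuous_intros cont_ee)

lemma EE_lo: "even n \<Longrightarrow> l \<le> u \<Longrightarrow> FI n u - FI n l \<le> integral {l..u} ee"
  by (rule has_integral_le[OF T_integral ee_int]) (auto intro: T_le_ee)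
lemma EE_hi: "odd n \<Longrightarrow> l \<le> u \<Longrightarrow> integral {l..u} ee \<le> FI n u - FI n l"
  by (rule has_integral_le[OF ee_int T_integral]) (auto intro: ee_le_T)
lemma XX_lo: "even n \<Longrightarrow> l \<le> u \<Longrightarrow> FX n u - FX n l \<le> integral {l..u} (\<lambda>x. x^2 * ee x)"
  by (rule has_integral_le[OF XT_integral xee_int]) (auto intro: T_le_ee mult_left_mono)
lemma XX_hi: "odd n \<Longrightarrow> l \<le> u \<Longrightarrow> integral {l..u} (\<lambda>x. x^2 * ee x) \<le> FX n u - FX n l"
  by (rule has_integral_le[OF xee_int XT_integral]) (auto intro: ee_le_T mult_left_mono)

lemma FI_odd: "FI n (-x) = - FI n x"
  unfolding FI_def by (simp add: sum_negf[symmetric] power_minus_odd)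
lemma FX_odd: "FX n (-x) = - FX n x"
  unfolding FX_def by (simp add: sum_negf[symmetric] power_minus_odd)



abbreviation "NN \<equiv> density lborel std_normal_density"
abbreviation "BB \<equiv> measure_pmf (bernoulli_pmf torrent_alpha)"

lemma ta: "torrent_alpha = 4/5" unfolding torrent_alpha_def by simp

lemma prob_NN: "prob_space NN"
  using prob_space_normal_density by simp

interpretation NP: prob_space NN by (rule prob_NN)
interpretation BP: prob_space BB by (rule prob_space_measure_pmf)
interpretation PP: pair_prob_space NN BB ..

lemma space_M: "space torrent_M = UNIV"
  unfolding torrent_M_def by (simp add: space_pair_measure)

lemma sets_M: "sets torrent_M = sets (lborel \<Otimes>\<^sub>M count_space UNIV)"
  unfolding torrent_M_def
  by (intro sets_pair_measure_cong) (auto simp: sets_measure_pmf_count_space)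

lemma meas_M: "f \<in> borel_measurable (lborel \<Otimes>\<^sub>M count_space UNIV) \<Longrightarrow> f \<in> borel_measurable torrent_M"
  by (subst measurable_cong_sets[OF sets_M refl])

lemma event_meas: "torrent_event w \<tau> \<in> sets torrent_M"
proof -
  have "torrent_event w \<tau> = {p \<in> space (lborel \<Otimes>\<^sub>M count_space UNIV). \<bar>bval (snd p) - fst p * w\<bar> < \<tau>}"
    unfolding torrent_event_def space_M by (simp add: space_pair_measure)
  also have "\<dots> \<in> sets (lborel \<Otimes>\<^sub>M count_space UNIV)"
  proof -
    have "(\<lambda>p::real\<times>bool. bval (snd p)) \<in> borel_measurable (lborel \<Otimes>\<^sub>M count_space UNIV)"
      by (intro measurable_compose[OF measurable_snd]) simp
    hence "(\<lambda>p::real\<times>bool. \<bar>bval (snd p) - fst p * w\<bar>) \<in> borel_measurable (lborel \<Otimes>\<^sub>M count_space UNIV)"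
      by measurable
    thus ?thesis by measurable
  qed
  finally show ?thesis by (subst sets_M)
qed


interpretation MP: prob_space torrent_M
  unfolding torrent_M_def by (rule PP.P.prob_space_axioms)

lemma int_M:
  fixes f :: "real \<times> bool \<Rightarrow> real"
  assumes f: "integrable torrent_M f"
  shows "integral\<^sup>L torrent_M f = (\<integral>x. (4/5 * f (x, True) + 1/5 * f (x, False)) \<partial>NN)"
proof -
  have f': "integrable (NN \<Otimes>\<^sub>M BB) (case_prod (\<lambda>x y. f (x, y)))"
    using f unfolding torrent_M_def by simp
  have "integral\<^sup>L torrent_M f = (\<integral>x. (\<integral>y. f (x, y) \<partial>BB) \<partial>NN)"
    using PP.integral_fst[of "\<lambda>x y. f (x, y)", OF f'] unfolding torrent_M_def by simp
  also have "\<dots> = (\<integral>x. (4/5 * f (x, True) + 1/5 * f (x, False)) \<partial>NN)"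
  proof (rule Bochner_Integration.integral_cong[OF refl])
    fix x
    have "(\<integral>y. f (x, y) \<partial>BB) = (\<Sum>a\<in>UNIV. pmf (bernoulli_pmf torrent_alpha) a *\<^sub>R f (x, a))"
      by (rule integral_measure_pmf) auto
    also have "\<dots> = 4/5 * f (x, True) + 1/5 * f (x, False)"
      by (simp add: UNIV_bool ta)
    finally show "(\<integral>y. f (x, y) \<partial>BB) = 4/5 * f (x, True) + 1/5 * f (x, False)" .
  qed
  finally show ?thesis .
qed

lemma event_True: "w > 0 \<Longrightarrow> ((x, True) \<in> torrent_event w \<tau>) = (x \<in> {(1-\<tau>)/w<..<(1+\<tau>)/w})"
  unfolding torrent_event_def space_M bval_def
  by (auto simp: abs_less_iff field_simps)

lemma event_False: "w > 0 \<Longrightarrow> ((x, False) \<in> torrent_event w \<tau>) = (x \<in> {-\<tau>/w<..<\<tau>/w})"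
  unfolding torrent_event_def space_M bval_def
  by (auto simp: abs_less_iff field_simps)

lemma event_bound: "w > 0 \<Longrightarrow> p \<in> torrent_event w \<tau> \<Longrightarrow> \<bar>fst p\<bar> \<le> (1 + \<bar>\<tau>\<bar>) / w"
proof -
  assume w: "w > 0" and p: "p \<in> torrent_event w \<tau>"
  have b: "\<bar>bval (snd p)\<bar> \<le> 1" unfolding bval_def by auto
  have "\<bar>bval (snd p) - fst p * w\<bar> < \<tau>" using p unfolding torrent_event_def by auto
  hence "\<bar>fst p * w\<bar> \<le> 1 + \<bar>\<tau>\<bar>" using b by linarith
  hence "\<bar>fst p\<bar> * w \<le> 1 + \<bar>\<tau>\<bar>" using w by (simp add: abs_mult)
  thus ?thesis using w by (simp add: field_simps)
qed

definition sq2pi :: real where "sq2pi = sqrt (2 * pi)"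

lemma sq2pi_pos: "sq2pi > 0" unfolding sq2pi_def by simp

lemma phi_ee: "std_normal_density x = ee x / sq2pi"
  unfolding std_normal_density_def ee_def sq2pi_def by simp

lemma L_int:
  assumes "l \<le> u"
  shows "integrable lborel (\<lambda>x. std_normal_density x * (x^k * indicator {l<..<u} x))"
    and "(\<integral>x. std_normal_density x * (x^k * indicator {l<..<u} x) \<partial>lborel) = integral {l..u} (\<lambda>x. ee x * x^k) / sq2pi"
proof -
  let ?h = "\<lambda>x. std_normal_density x * x^k"
  have c: "continuous_on {l..u} ?h" unfolding std_normal_density_def by (intro continuous_intros) auto
  have si: "set_integrable lborel {l..u} ?h"
    unfolding set_integrable_def by (rule borel_integrable_compact[OF compact_Icc c])
  have si2: "set_integrable lborel {l<..<u} ?h"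
    by (rule set_integrable_subset[OF si]) auto
  have eq: "(\<lambda>x. std_normal_density x * (x^k * indicator {l<..<u} x)) = (\<lambda>x. indicator {l<..<u} x *\<^sub>R ?h x)"
    by (auto simp: indicator_def)
  show "integrable lborel (\<lambda>x. std_normal_density x * (x^k * indicator {l<..<u} x))"
    using si2 unfolding set_integrable_def eq .
  have "(\<integral>x. std_normal_density x * (x^k * indicator {l<..<u} x) \<partial>lborel) = (LINT x:{l<..<u}|lborel. ?h x)"
    unfolding set_lebesgue_integral_def eq ..
  also have "\<dots> = integral {l<..<u} ?h" by (rule set_borel_integral_eq_integral(2)[OF si2])
  also have "\<dots> = integral {l..u} ?h" by (rule integral_open_interval_real[symmetric])
  also have "\<dots> = integral {l..u} (\<lambda>x. (1/sq2pi) *\<^sub>R (ee x * x^k))"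
    unfolding phi_ee by (simp add: field_simps)
  also have "\<dots> = integral {l..u} (\<lambda>x. ee x * x^k) / sq2pi"
    unfolding integral_cmul by simp
  finally show "(\<integral>x. std_normal_density x * (x^k * indicator {l<..<u} x) \<partial>lborel) = integral {l..u} (\<lambda>x. ee x * x^k) / sq2pi" .
qed


lemma key_int:
  assumes w: "w > 0" and tau: "\<tau> > 0" and c: "\<And>b. \<bar>c b\<bar> \<le> 1"
  shows "(\<integral>p. c (snd p) * fst p ^ k * indicator (torrent_event w \<tau>) p \<partial>torrent_M) =
    (4/5 * c True * integral {(1-\<tau>)/w..(1+\<tau>)/w} (\<lambda>x. ee x * x^k) + 1/5 * c False * integral {-\<tau>/w..\<tau>/w} (\<lambda>x. ee x * x^k)) / sq2pi"
proof -
  define E where "E = torrent_event w \<tau>"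
  define f where "f = (\<lambda>p::real\<times>bool. c (snd p) * fst p ^ k * indicator E p)"
  define R where "R = (1 + \<tau>) / w"
  have R0: "R > 0" unfolding R_def using w tau by simp
  have Es: "E \<in> sets (lborel \<Otimes>\<^sub>M count_space UNIV)" using event_meas sets_M unfolding E_def by simp
  have cm: "(\<lambda>p::real\<times>bool. c (snd p)) \<in> borel_measurable (lborel \<Otimes>\<^sub>M count_space UNIV)"
    by (intro measurable_compose[OF measurable_snd]) simp
  have fm: "f \<in> borel_measurable torrent_M" unfolding f_def
    by (intro meas_M borel_measurable_times cm borel_measurable_indicator Es) measurable
  have fb: "norm (f p) \<le> R ^ k" for p
  proof (cases "p \<in> E")
    case True
    have "\<bar>fst p\<bar> \<le> R" using event_bound[OF w True[unfolded E_def]] tau unfolding R_def by simp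
    hence "\<bar>fst p\<bar> ^ k \<le> R ^ k" by (rule power_mono) simp
    moreover have "\<bar>c (snd p)\<bar> * \<bar>fst p\<bar> ^ k \<le> 1 * \<bar>fst p\<bar> ^ k" using c by (intro mult_right_mono) auto
    ultimately show ?thesis unfolding f_def using True by (simp add: abs_mult power_abs)
  next
    case False then show ?thesis unfolding f_def using R0 by simp
  qed
  have fi: "integrable torrent_M f"
    by (rule MP.integrable_const_bound[where B="R^k"]) (use fb fm in auto)
  have I1: "(1-\<tau>)/w \<le> (1+\<tau>)/w" and I0: "-\<tau>/w \<le> \<tau>/w" using w tau by (auto simp: divide_right_mono)
  define g where "g = (\<lambda>x. 4/5 * c True * (x^k * indicator {(1-\<tau>)/w<..<(1+\<tau>)/w} x) + 1/5 * c False * (x^k * indicator {-\<tau>/w<..<\<tau>/w} x))"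
  have fg: "4/5 * f (x, True) + 1/5 * f (x, False) = g x" for x
    unfolding f_def g_def E_def using event_True[OF w] event_False[OF w]
    by (simp add: indicator_def)
  have "integral\<^sup>L torrent_M f = (\<integral>x. g x \<partial>NN)" unfolding int_M[OF fi] fg ..
  also have "\<dots> = (\<integral>x. std_normal_density x *\<^sub>R g x \<partial>lborel)"
    by (rule integral_density) (auto simp: g_def)
  also have "\<dots> = (\<integral>x. 4/5 * c True * (std_normal_density x * (x^k * indicator {(1-\<tau>)/w<..<(1+\<tau>)/w} x))
                  + 1/5 * c False * (std_normal_density x * (x^k * indicator {-\<tau>/w<..<\<tau>/w} x)) \<partial>lborel)"
    unfolding g_def by (simp add: algebra_simps)
  also have "\<dots> = 4/5 * c True * (\<integral>x. std_normal_density x * (x^k * indicator {(1-\<tau>)/w<..<(1+\<tau>)/w} x) \<partial>lborel)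
                  + 1/5 * c False * (\<integral>x. std_normal_density x * (x^k * indicator {-\<tau>/w<..<\<tau>/w} x) \<partial>lborel)"
    using L_int(1)[OF I1, of k] L_int(1)[OF I0, of k] by simp
  also have "\<dots> = (4/5 * c True * integral {(1-\<tau>)/w..(1+\<tau>)/w} (\<lambda>x. ee x * x^k) + 1/5 * c False * integral {-\<tau>/w..\<tau>/w} (\<lambda>x. ee x * x^k)) / sq2pi"
    unfolding L_int(2)[OF I1] L_int(2)[OF I0] using sq2pi_pos by (simp add: field_simps)
  finally show ?thesis unfolding f_def E_def .
qed



definition EE :: "real \<Rightarrow> real \<Rightarrow> real" where "EE l u = integral {l..u} ee"
definition XX :: "real \<Rightarrow> real \<Rightarrow> real" where "XX l u = integral {l..u} (\<lambda>x. x^2 * ee x)"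

lemma ee_pos: "ee x > 0" unfolding ee_def by simp

lemma ee_dec: "0 \<le> x \<Longrightarrow> x \<le> y \<Longrightarrow> ee y \<le> ee x"
  unfolding ee_def by (simp add: power_mono)

lemma ee_integrable: "ee integrable_on S" if "S = {l..u}" for S l u
  using that by (simp add: integrable_continuous_interval cont_ee)

lemma xee_integrable: "(\<lambda>x. x^2 * ee x) integrable_on {l..u}"
  by (intro integrable_continuous_interval continuous_intros cont_ee)

lemma EE_nonneg: "0 \<le> EE l u"
  unfolding EE_def by (rule integral_nonneg[OF ee_integrable[OF refl]]) (simp add: less_imp_le[OF ee_pos])

lemma XX_nonneg: "0 \<le> XX l u"
  unfolding XX_def by (rule integral_nonneg[OF xee_integrable]) (simp add: less_imp_le[OF ee_pos])

lemma EE_mono: "l' \<le> l \<Longrightarrow> u \<le> u' \<Longrightarrow> EE l u \<le> EE l' u'"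
  unfolding EE_def
  by (rule integral_subset_le) (auto intro: ee_integrable less_imp_le[OF ee_pos])

lemma XX_mono: "l' \<le> l \<Longrightarrow> u \<le> u' \<Longrightarrow> XX l u \<le> XX l' u'"
  unfolding XX_def
  by (rule integral_subset_le) (auto intro!: xee_integrable mult_nonneg_nonneg less_imp_le[OF ee_pos])

lemma EE_split: "a \<le> b \<Longrightarrow> b \<le> c \<Longrightarrow> EE a c = EE a b + EE b c"
proof -
  assume h: "a \<le> b" "b \<le> c"
  have "integral {a..b} ee + integral {b..c} ee = integral {a..c} ee"
    by (rule Henstock_Kurzweil_Integration.integral_combine) (use h in \<open>auto intro: ee_integrable\<close>)
  thus ?thesis unfolding EE_def by simp
qed

lemma XX_split: "a \<le> b \<Longrightarrow> b \<le> c \<Longrightarrow> XX a c = XX a b + XX b c"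
proof -
  assume h: "a \<le> b" "b \<le> c"
  have "integral {a..b} (\<lambda>x. x^2 * ee x) + integral {b..c} (\<lambda>x. x^2 * ee x) = integral {a..c} (\<lambda>x. x^2 * ee x)"
    by (rule Henstock_Kurzweil_Integration.integral_combine) (use h in \<open>auto intro: xee_integrable\<close>)
  thus ?thesis unfolding XX_def by simp
qed

lemma EE_lower: "0 \<le> a \<Longrightarrow> a \<le> b \<Longrightarrow> (b - a) * ee b \<le> EE a b"
proof -
  assume a: "0 \<le> a" "a \<le> b"
  have "((\<lambda>x. ee b) has_integral ((b - a) * ee b)) {a..b}" using has_integral_const_real[of "ee b" a b] a by simp
  moreover have "(ee has_integral EE a b) {a..b}" unfolding EE_def by (rule ee_int)
  ultimately show "(b - a) * ee b \<le> EE a b"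
    by (rule has_integral_le) (use a in \<open>auto intro: ee_dec\<close>)
qed

lemma EE_sym_strict: "0 \<le> s1 \<Longrightarrow> s1 < s2 \<Longrightarrow> EE (-s1) s1 < EE (-s2) s2"
proof -
  assume s: "0 \<le> s1" "s1 < s2"
  have "EE (-s2) s2 = EE (-s2) (-s1) + EE (-s1) s2" by (rule EE_split) (use s in auto)
  also have "EE (-s1) s2 = EE (-s1) s1 + EE s1 s2" by (rule EE_split) (use s in auto)
  finally have e: "EE (-s2) s2 = EE (-s2) (-s1) + EE (-s1) s1 + EE s1 s2" by simp
  have "0 < (s2 - s1) * ee s2" using s ee_pos by simp
  also have "\<dots> \<le> EE s1 s2" by (rule EE_lower) (use s in auto)
  finally show ?thesis using e EE_nonneg[of "-s2" "-s1"] by linarith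
qed

lemma EE_empty: "EE a a = 0" unfolding EE_def by simp

definition PhiE :: "real \<Rightarrow> real" where "PhiE x = integral {-10..x} ee"
definition PhiX :: "real \<Rightarrow> real" where "PhiX x = integral {-10..x} (\<lambda>x. x^2 * ee x)"

lemma cont_PhiE: "continuous_on {-10..10} PhiE"
  unfolding PhiE_def by (rule indefinite_integral_continuous_1) (rule ee_integrable, simp)
lemma cont_PhiX: "continuous_on {-10..10} PhiX"
  unfolding PhiX_def by (rule indefinite_integral_continuous_1) (rule xee_integrable)

lemma EE_Phi: "-10 \<le> l \<Longrightarrow> l \<le> u \<Longrightarrow> EE l u = PhiE u - PhiE l"
  using EE_split[of "-10" l u] unfolding PhiE_def EE_def by simp
lemma XX_Phi: "-10 \<le> l \<Longrightarrow> l \<le> u \<Longrightarrow> XX l u = PhiX u - PhiX l"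
  using XX_split[of "-10" l u] unfolding PhiX_def XX_def by simp

lemma xee_integral: "l \<le> u \<Longrightarrow> integral {l..u} (\<lambda>x. ee x * x) = ee l - ee u"
proof -
  assume lu: "l \<le> u"
  have "((\<lambda>x. ee x * x) has_integral ((- ee u) - (- ee l))) {l..u}"
  proof (rule fundamental_theorem_of_calculus[OF lu])
    fix x
    have "((\<lambda>x. - ee x) has_real_derivative ee x * x) (at x within {l..u})"
      unfolding ee_def by (rule derivative_eq_intros refl | simp)+
    thus "((\<lambda>x. - ee x) has_vector_derivative ee x * x) (at x within {l..u})"
      by (simp add: has_real_derivative_iff_has_vector_derivative)
  qed
  thus ?thesis by (simp add: integral_unique)
qed

definition mt :: "real \<Rightarrow> real \<Rightarrow> real" where
  "mt w t = 4/5 * EE ((1-t)/w) ((1+t)/w) + 1/5 * EE (-t/w) (t/w)"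
definition nt :: "real \<Rightarrow> real \<Rightarrow> real" where
  "nt w t = 4/5 * (ee ((1-t)/w) - ee ((1+t)/w))"
definition dt :: "real \<Rightarrow> real \<Rightarrow> real" where
  "dt w t = 4/5 * XX ((1-t)/w) ((1+t)/w) + 1/5 * XX (-t/w) (t/w)"

lemma ev_space: "torrent_event w t \<inter> space torrent_M = torrent_event w t"
  unfolding torrent_event_def by auto

lemma meas_eq: "w > 0 \<Longrightarrow> t > 0 \<Longrightarrow> measure torrent_M (torrent_event w t) = mt w t / sq2pi"
proof -
  assume w: "w > 0" and t: "t > 0"
  have k: "(\<integral>p. 1 * fst p ^ 0 * indicator (torrent_event w t) p \<partial>torrent_M) =
    (4/5 * 1 * integral {(1-t)/w..(1+t)/w} (\<lambda>x. ee x * x^0) + 1/5 * 1 * integral {-t/w..t/w} (\<lambda>x. ee x * x^0)) / sq2pi"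
    using key_int[OF w t, of "\<lambda>_. 1" 0] by simp
  have "integral\<^sup>L torrent_M (indicator (torrent_event w t)) = measure torrent_M (torrent_event w t)"
    unfolding Bochner_Integration.integral_indicator ev_space ..
  thus ?thesis using k unfolding mt_def EE_def by simp
qed

lemma num_eq: "w > 0 \<Longrightarrow> t > 0 \<Longrightarrow> (\<integral>p. bval (snd p) * fst p * indicator (torrent_event w t) p \<partial>torrent_M) = nt w t / sq2pi"
proof -
  assume w: "w > 0" and t: "t > 0"
  have lu: "(1-t)/w \<le> (1+t)/w" using w t by (simp add: divide_right_mono)
  have b: "\<bar>bval b\<bar> \<le> 1" for b unfolding bval_def by simp
  have k: "(\<integral>p. bval (snd p) * fst p ^ 1 * indicator (torrent_event w t) p \<partial>torrent_M) =
    (4/5 * bval True * integral {(1-t)/w..(1+t)/w} (\<lambda>x. ee x * x^1) + 1/5 * bval False * integral {-t/w..t/w} (\<lambda>x. ee x * x^1)) / sq2pi"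
    by (rule key_int[OF w t b])
  have bv: "bval True = 1" "bval False = 0" unfolding bval_def by simp_all
  show ?thesis using k unfolding nt_def bv power_one_right xee_integral[OF lu] by simp
qed

lemma den_eq: "w > 0 \<Longrightarrow> t > 0 \<Longrightarrow> (\<integral>p. (fst p)^2 * indicator (torrent_event w t) p \<partial>torrent_M) = dt w t / sq2pi"
proof -
  assume w: "w > 0" and t: "t > 0"
  have k: "(\<integral>p. 1 * fst p ^ 2 * indicator (torrent_event w t) p \<partial>torrent_M) =
    (4/5 * 1 * integral {(1-t)/w..(1+t)/w} (\<lambda>x. ee x * x^2) + 1/5 * 1 * integral {-t/w..t/w} (\<lambda>x. ee x * x^2)) / sq2pi"
    using key_int[OF w t, of "\<lambda>_. 1" 2] by simp
  have c: "(\<lambda>x. ee x * x^2) = (\<lambda>x. x^2 * ee x)" by (simp add: mult.commute)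
  show ?thesis using k unfolding dt_def XX_def c by simp
qed



lemma EE_ub: "odd n \<Longrightarrow> l \<le> u \<Longrightarrow> FI n u \<le> A \<Longrightarrow> B \<le> FI n l \<Longrightarrow> EE l u \<le> A - B"
  using EE_hi[of n l u] unfolding EE_def by linarith
lemma EE_lb: "even n \<Longrightarrow> l \<le> u \<Longrightarrow> A \<le> FI n u \<Longrightarrow> FI n l \<le> B \<Longrightarrow> A - B \<le> EE l u"
  using EE_lo[of n l u] unfolding EE_def by linarith
lemma EEs_ub: "odd n \<Longrightarrow> 0 \<le> c \<Longrightarrow> FI n c \<le> A \<Longrightarrow> EE (-c) c \<le> 2 * A"
  using EE_hi[of n "-c" c] unfolding EE_def FI_odd by linarith
lemma EEs_lb: "even n \<Longrightarrow> 0 \<le> c \<Longrightarrow> A \<le> FI n c \<Longrightarrow> 2 * A \<le> EE (-c) c"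
  using EE_lo[of n "-c" c] unfolding EE_def FI_odd by linarith
lemma XX_ub: "odd n \<Longrightarrow> l \<le> u \<Longrightarrow> FX n u \<le> A \<Longrightarrow> B \<le> FX n l \<Longrightarrow> XX l u \<le> A - B"
  using XX_hi[of n l u] unfolding XX_def by linarith
lemma XX_lb: "even n \<Longrightarrow> l \<le> u \<Longrightarrow> A \<le> FX n u \<Longrightarrow> FX n l \<le> B \<Longrightarrow> A - B \<le> XX l u"
  using XX_lo[of n l u] unfolding XX_def by linarith
lemma XXs_ub: "odd n \<Longrightarrow> 0 \<le> c \<Longrightarrow> FX n c \<le> A \<Longrightarrow> XX (-c) c \<le> 2 * A"
  using XX_hi[of n "-c" c] unfolding XX_def FX_odd by linarith
lemma XXs_lb: "even n \<Longrightarrow> 0 \<le> c \<Longrightarrow> A \<le> FX n c \<Longrightarrow> 2 * A \<le> XX (-c) c"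
  using XX_lo[of n "-c" c] unfolding XX_def FX_odd by linarith
lemma ee_ub: "odd n \<Longrightarrow> T n x \<le> A \<Longrightarrow> ee x \<le> A"
  using ee_le_T[of n x] by linarith
lemma ee_lb: "even n \<Longrightarrow> A \<le> T n x \<Longrightarrow> A \<le> ee x"
  using T_le_ee[of n x] by linarith

lemma sq2pi_lo: "25066/10000 \<le> sq2pi"
  unfolding sq2pi_def using pi_approx by (intro real_le_rsqrt) (simp add: power2_eq_square)

lemma sq2pi_hi: "sq2pi \<le> 25067/10000"
proof -
  have "2 * pi \<le> (25067/10000)^2" using pi_approx by (simp add: power2_eq_square)
  hence "sqrt (2 * pi) \<le> sqrt ((25067/10000)^2)" by (rule real_sqrt_le_mono)
  thus ?thesis unfolding sq2pi_def by simp
qed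

lemma atom1: "FI 23 (1373/550) \<le> (309397079/250000000)"
proof -
  have e: "SU (1373^2) (550^2) rnI rdI 1099511627776 1099511627776 0 23 = 545089955619"
    by (simp add: SU_numeral rnI_def rdI_def)
  have "FI 23 (real 1373 / real 550) \<le> real 1373 / real 550 * (real_of_int (SU (1373^2) (550^2) rnI rdI 1099511627776 1099511627776 0 23) / real (1099511627776::nat))"
    by (rule FI_hi) simp_all
  thus ?thesis unfolding e by (simp add: power_divide)
qed

lemma atom2: "(9346135211/10000000000) \<le> FI 23 (57/50)"
proof -
  have e: "SL (57^2) (50^2) rnI rdI 1099511627776 1099511627776 0 23 = 901419678957"
    by (simp add: SL_numeral rnI_def rdI_def)
  have "real 57 / real 50 * (real_of_int (SL (57^2) (50^2) rnI rdI 1099511627776 1099511627776 0 23) / real (1099511627776::nat)) \<le> FI 23 (real 57 / real 50)"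
    by (rule FI_lo) simp_all
  thus ?thesis unfolding e by (simp add: power_divide)
qed

lemma atom3: "FI 9 (373/550) \<le> (6295943117/10000000000)"
proof -
  have e: "SU (373^2) (550^2) rnI rdI 1099511627776 1099511627776 0 9 = 1020738462548"
    by (simp add: SU_numeral rnI_def rdI_def)
  have "FI 9 (real 373 / real 550) \<le> real 373 / real 550 * (real_of_int (SU (373^2) (550^2) rnI rdI 1099511627776 1099511627776 0 9) / real (1099511627776::nat))"
    by (rule FI_hi) simp_all
  thus ?thesis unfolding e by (simp add: power_divide)
qed

lemma atom4: "(773985247/625000000) \<le> FI 22 (1383/550)"
proof -
  have e: "SL (1383^2) (550^2) rnI rdI 1099511627776 1099511627776 0 22 = 541493192599"
    by (simp add: SL_numeral rnI_def rdI_def)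
  have "real 1383 / real 550 * (real_of_int (SL (1383^2) (550^2) rnI rdI 1099511627776 1099511627776 0 22) / real (1099511627776::nat)) \<le> FI 22 (real 1383 / real 550)"
    by (rule FI_lo) simp_all
  thus ?thesis unfolding e by (simp add: power_divide)
qed

lemma atom5: "FI 22 (617/550) \<le> (4625106703/5000000000)"
proof -
  have e: "SU (617^2) (550^2) rnI rdI 1099511627776 1099511627776 0 22 = 906627951276"
    by (simp add: SU_numeral rnI_def rdI_def)
  have "FI 22 (real 617 / real 550) \<le> real 617 / real 550 * (real_of_int (SU (617^2) (550^2) rnI rdI 1099511627776 1099511627776 0 22) / real (1099511627776::nat))"
    by (rule FI_hi) simp_all
  thus ?thesis unfolding e by (simp add: power_divide)
qed

lemma atom6: "(1609878469/2500000000) \<le> FI 10 (383/550)"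
proof -
  have e: "SL (383^2) (550^2) rnI rdI 1099511627776 1099511627776 0 10 = 1016756191010"
    by (simp add: SL_numeral rnI_def rdI_def)
  have "real 383 / real 550 * (real_of_int (SL (383^2) (550^2) rnI rdI 1099511627776 1099511627776 0 10) / real (1099511627776::nat)) \<le> FI 10 (real 383 / real 550)"
    by (rule FI_lo) simp_all
  thus ?thesis unfolding e by (simp add: power_divide)
qed

lemma atom7: "FI 9 (31/40) \<le> (7039368451/10000000000)"
proof -
  have e: "SU (31^2) (40^2) rnI rdI 1099511627776 1099511627776 0 9 = 998692575889"
    by (simp add: SU_numeral rnI_def rdI_def)
  have "FI 9 (real 31 / real 40) \<le> real 31 / real 40 * (real_of_int (SU (31^2) (40^2) rnI rdI 1099511627776 1099511627776 0 9) / real (1099511627776::nat))"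
    by (rule FI_hi) simp_all
  thus ?thesis unfolding e by (simp add: power_divide)
qed

lemma atom8: "(2231158923/10000000000) \<le> FI 9 (9/40)"
proof -
  have e: "SL (9^2) (40^2) rnI rdI 1099511627776 1099511627776 0 9 = 1090304524119"
    by (simp add: SL_numeral rnI_def rdI_def)
  have "real 9 / real 40 * (real_of_int (SL (9^2) (40^2) rnI rdI 1099511627776 1099511627776 0 9) / real (1099511627776::nat)) \<le> FI 9 (real 9 / real 40)"
    by (rule FI_lo) simp_all
  thus ?thesis unfolding e by (simp add: power_divide)
qed

lemma atom9: "FI 7 (11/40) \<le> (2715728219/10000000000)"
proof -
  have e: "SU (11^2) (40^2) rnI rdI 1099511627776 1099511627776 0 7 = 1085809001527"
    by (simp add: SU_numeral rnI_def rdI_def)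
  have "FI 7 (real 11 / real 40) \<le> real 11 / real 40 * (real_of_int (SU (11^2) (40^2) rnI rdI 1099511627776 1099511627776 0 7) / real (1099511627776::nat))"
    by (rule FI_hi) simp_all
  thus ?thesis unfolding e by (simp add: power_divide)
qed

lemma atom10: "(355656983/500000000) \<le> FI 10 (157/200)"
proof -
  have e: "SL (157^2) (200^2) rnI rdI 1099511627776 1099511627776 0 10 = 996303155008"
    by (simp add: SL_numeral rnI_def rdI_def)
  have "real 157 / real 200 * (real_of_int (SL (157^2) (200^2) rnI rdI 1099511627776 1099511627776 0 10) / real (1099511627776::nat)) \<le> FI 10 (real 157 / real 200)"
    by (rule FI_lo) simp_all
  thus ?thesis unfolding e by (simp add: power_divide)
qed

lemma atom11: "FI 10 (43/200) \<le> (2133550263/10000000000)"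
proof -
  have e: "SU (43^2) (200^2) rnI rdI 1099511627776 1099511627776 0 10 = 1091099219734"
    by (simp add: SU_numeral rnI_def rdI_def)
  have "FI 10 (real 43 / real 200) \<le> real 43 / real 200 * (real_of_int (SU (43^2) (200^2) rnI rdI 1099511627776 1099511627776 0 10) / real (1099511627776::nat))"
    by (rule FI_hi) simp_all
  thus ?thesis unfolding e by (simp add: power_divide)
qed

lemma atom12: "(2811883687/10000000000) \<le> FI 6 (57/200)"
proof -
  have e: "SL (57^2) (200^2) rnI rdI 1099511627776 1099511627776 0 6 = 1084806599987"
    by (simp add: SL_numeral rnI_def rdI_def)
  have "real 57 / real 200 * (real_of_int (SL (57^2) (200^2) rnI rdI 1099511627776 1099511627776 0 6) / real (1099511627776::nat)) \<le> FI 6 (real 57 / real 200)"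
    by (rule FI_lo) simp_all
  thus ?thesis unfolding e by (simp add: power_divide)
qed

lemma atom13: "FX 23 (1383/550) \<le> (11318515859/10000000000)"
proof -
  have e: "SU (1383^2) (550^2) rnX rdX 1099511627776 1099511627776 0 23 = 234818383011"
    by (simp add: SU_numeral rnX_def rdX_def)
  have "FX 23 (real 1383 / real 550) \<le> (real 1383 / real 550)^3 / 3 * (real_of_int (SU (1383^2) (550^2) rnX rdX 1099511627776 1099511627776 0 23) / real (1099511627776::nat))"
    by (rule FX_hi) simp_all
  thus ?thesis unfolding e by (simp add: power_divide)
qed

lemma atom14: "(163547369/500000000) \<le> FX 23 (617/550)"
proof -
  have e: "SL (617^2) (550^2) rnX rdX 1099511627776 1099511627776 0 23 = 764235513807"
    by (simp add: SL_numeral rnX_def rdX_def)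
  have "(real 617 / real 550)^3 / 3 * (real_of_int (SL (617^2) (550^2) rnX rdX 1099511627776 1099511627776 0 23) / real (1099511627776::nat)) \<le> FX 23 (real 617 / real 550)"
    by (rule FX_lo) simp_all
  thus ?thesis unfolding e by (simp add: power_divide)
qed

lemma atom15: "FX 9 (383/550) \<le> (7801509/80000000)"
proof -
  have e: "SU (383^2) (550^2) rnX rdX 1099511627776 1099511627776 0 9 = 952579989966"
    by (simp add: SU_numeral rnX_def rdX_def)
  have "FX 9 (real 383 / real 550) \<le> (real 383 / real 550)^3 / 3 * (real_of_int (SU (383^2) (550^2) rnX rdX 1099511627776 1099511627776 0 9) / real (1099511627776::nat))"
    by (rule FX_hi) simp_all
  thus ?thesis unfolding e by (simp add: power_divide)
qed

lemma atom16: "(5221501963/10000000000) \<le> T 14 (57/50)"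
proof -
  have e: "SL (57^2) (50^2) rnT rdT 1099511627776 1099511627776 0 14 = 574110212334"
    by (simp add: SL_numeral rnT_def rdT_def)
  have "real_of_int (SL (57^2) (50^2) rnT rdT 1099511627776 1099511627776 0 14) / real (1099511627776::nat) \<le> T 14 (real 57 / real 50)"
    by (rule T_lo) simp_all
  thus ?thesis unfolding e by (simp add: power_divide)
qed

lemma atom17: "T 23 (1373/550) \<le> (443378883/10000000000)"
proof -
  have e: "SU (1373^2) (550^2) rnT rdT 1099511627776 1099511627776 0 23 = 48750023700"
    by (simp add: SU_numeral rnT_def rdT_def)
  have "T 23 (real 1373 / real 550) \<le> real_of_int (SU (1373^2) (550^2) rnT rdT 1099511627776 1099511627776 0 23) / real (1099511627776::nat)"
    by (rule T_hi) simp_all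
  thus ?thesis unfolding e by (simp add: power_divide)
qed

lemma atom18: "(162477641/1250000000) \<le> FX 10 (31/40)"
proof -
  have e: "SL (31^2) (40^2) rnX rdX 1099511627776 1099511627776 0 10 = 921084694807"
    by (simp add: SL_numeral rnX_def rdX_def)
  have "(real 31 / real 40)^3 / 3 * (real_of_int (SL (31^2) (40^2) rnX rdX 1099511627776 1099511627776 0 10) / real (1099511627776::nat)) \<le> FX 10 (real 31 / real 40)"
    by (rule FX_lo) simp_all
  thus ?thesis unfolding e by (simp add: power_divide)
qed

lemma atom19: "FX 10 (9/40) \<le> (37397279/10000000000)"
proof -
  have e: "SU (9^2) (40^2) rnX rdX 1099511627776 1099511627776 0 10 = 1082962769795"
    by (simp add: SU_numeral rnX_def rdX_def)
  have "FX 10 (real 9 / real 40) \<le> (real 9 / real 40)^3 / 3 * (real_of_int (SU (9^2) (40^2) rnX rdX 1099511627776 1099511627776 0 10) / real (1099511627776::nat))"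
    by (rule FX_hi) simp_all
  thus ?thesis unfolding e by (simp add: power_divide)
qed

lemma atom20: "(13554237/2000000000) \<le> FX 6 (11/40)"
proof -
  have e: "SL (11^2) (40^2) rnX rdX 1099511627776 1099511627776 0 6 = 1074900051826"
    by (simp add: SL_numeral rnX_def rdX_def)
  have "(real 11 / real 40)^3 / 3 * (real_of_int (SL (11^2) (40^2) rnX rdX 1099511627776 1099511627776 0 6) / real (1099511627776::nat)) \<le> FX 6 (real 11 / real 40)"
    by (rule FX_lo) simp_all
  thus ?thesis unfolding e by (simp add: power_divide)
qed

lemma atom21: "T 7 (43/200) \<le> (244288137/250000000)"
proof -
  have e: "SU (43^2) (200^2) rnT rdT 1099511627776 1099511627776 0 7 = 1074390588562"
    by (simp add: SU_numeral rnT_def rdT_def)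
  have "T 7 (real 43 / real 200) \<le> real_of_int (SU (43^2) (200^2) rnT rdT 1099511627776 1099511627776 0 7) / real (1099511627776::nat)"
    by (rule T_hi) simp_all
  thus ?thesis unfolding e by (simp add: power_divide)
qed

lemma atom22: "(3674163223/5000000000) \<le> T 10 (157/200)"
proof -
  have e: "SL (157^2) (200^2) rnT rdT 1099511627776 1099511627776 0 10 = 807957037295"
    by (simp add: SL_numeral rnT_def rdT_def)
  have "real_of_int (SL (157^2) (200^2) rnT rdT 1099511627776 1099511627776 0 10) / real (1099511627776::nat) \<le> T 10 (real 157 / real 200)"
    by (rule T_lo) simp_all
  thus ?thesis unfolding e by (simp add: power_divide)
qed

lemma atom23: "(4278121959/5000000000) \<le> FI 12 (1)"
proof -
  have e: "SL (1^2) (1^2) rnI rdI 1099511627776 1099511627776 0 12 = 940768967889"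
    by (simp add: SL_numeral rnI_def rdI_def)
  have "real 1 / real 1 * (real_of_int (SL (1^2) (1^2) rnI rdI 1099511627776 1099511627776 0 12) / real (1099511627776::nat)) \<le> FI 12 (real 1 / real 1)"
    by (rule FI_lo) simp_all
  thus ?thesis unfolding e by (simp add: power_divide)
qed

lemma atom24: "FI 12 (0) \<le> (0)"
proof -
  have e: "SU (0^2) (1^2) rnI rdI 1099511627776 1099511627776 0 12 = 1099511627776"
    by (simp add: SU_numeral rnI_def rdI_def)
  have "FI 12 (real 0 / real 1) \<le> real 0 / real 1 * (real_of_int (SU (0^2) (1^2) rnI rdI 1099511627776 1099511627776 0 12) / real (1099511627776::nat))"
    by (rule FI_hi) simp_all
  thus ?thesis unfolding e by (simp add: power_divide)
qed

lemma NA1: "mt (11/20) (373/1000) < sq2pi/5"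
proof -
  have args: "(1 - (373/1000)) / (11/20) = ((57/50)::real)" "(1 + (373/1000)) / (11/20) = ((1373/550)::real)" "- (373/1000) / (11/20) = (- (373/550)::real)" "(373/1000) / (11/20) = ((373/550)::real)"
    by simp_all
  have a: "EE (57/50) (1373/550) \<le> (3029747949/10000000000)" using EE_ub[OF _ _ atom1 atom2] by simp
  have b: "EE (- (373/550)) (373/550) \<le> (6295943117/5000000000)" using EEs_ub[OF _ _ atom3] by simp
  show ?thesis unfolding mt_def args using a b sq2pi_lo by linarith
qed

lemma NA2: "sq2pi/5 < mt (11/20) (383/1000)"
proof -
  have args: "(1 - (383/1000)) / (11/20) = ((617/550)::real)" "(1 + (383/1000)) / (11/20) = ((1383/550)::real)" "- (383/1000) / (11/20) = (- (383/550)::real)" "(383/1000) / (11/20) = ((383/550)::real)"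
    by simp_all
  have a: "EE (617/550) (1383/550) \<ge> (1566775273/5000000000)" using EE_lb[OF _ _ atom4 atom5] by simp
  have b: "EE (- (383/550)) (383/550) \<ge> (1609878469/1250000000)" using EEs_lb[OF _ _ atom6] by simp
  show ?thesis unfolding mt_def args using a b sq2pi_hi by linarith
qed

lemma NC1: "mt (2) (11/20) < sq2pi/5"
proof -
  have args: "(1 - (11/20)) / (2) = ((9/40)::real)" "(1 + (11/20)) / (2) = ((31/40)::real)" "- (11/20) / (2) = (- (11/40)::real)" "(11/20) / (2) = ((11/40)::real)"
    by simp_all
  have a: "EE (9/40) (31/40) \<le> (601026191/1250000000)" using EE_ub[OF _ _ atom7 atom8] by simp
  have b: "EE (- (11/40)) (11/40) \<le> (2715728219/5000000000)" using EEs_ub[OF _ _ atom9] by simp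
  show ?thesis unfolding mt_def args using a b sq2pi_lo by linarith
qed

lemma NC2: "sq2pi/5 < mt (2) (57/100)"
proof -
  have args: "(1 - (57/100)) / (2) = ((43/200)::real)" "(1 + (57/100)) / (2) = ((157/200)::real)" "- (57/100) / (2) = (- (57/200)::real)" "(57/100) / (2) = ((57/200)::real)"
    by simp_all
  have a: "EE (43/200) (157/200) \<ge> (4979589397/10000000000)" using EE_lb[OF _ _ atom10 atom11] by simp
  have b: "EE (- (57/200)) (57/200) \<ge> (2811883687/5000000000)" using EEs_lb[OF _ _ atom12] by simp
  show ?thesis unfolding mt_def args using a b sq2pi_hi by linarith
qed

lemma NA3: "11/20 * dt (11/20) (383/1000) < 4/5 * (ee ((1 - 373/1000)/(11/20)) - ee ((1 + 373/1000)/(11/20)))"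
proof -
  have args: "(1 - (383/1000)) / (11/20) = ((617/550)::real)" "(1 + (383/1000)) / (11/20) = ((1383/550)::real)" "- (383/1000) / (11/20) = (- (383/550)::real)" "(383/1000) / (11/20) = ((383/550)::real)"
    by simp_all
  have args2: "(1 - 373/1000) / (11/20) = ((57/50)::real)" "(1 + 373/1000) / (11/20) = ((1373/550)::real)" by simp_all
  have a: "XX (617/550) (1383/550) \<le> (8047568479/10000000000)" using XX_ub[OF _ _ atom13 atom14] by simp
  have b: "XX (- (383/550)) (383/550) \<le> (7801509/40000000)" using XXs_ub[OF _ _ atom15] by simp
  have c: "ee (57/50) \<ge> (5221501963/10000000000)" using ee_lb[OF _ atom16] by simp
  have d: "ee (1373/550) \<le> (443378883/10000000000)" using ee_ub[OF _ atom17] by simp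
  show ?thesis unfolding dt_def args args2 using a b c d by (simp add: field_simps)
qed

lemma NC3: "4/5 * (ee ((1 - 57/100)/2) - ee ((1 + 57/100)/2)) < 2 * dt 2 (11/20)"
proof -
  have args: "(1 - (11/20)) / (2) = ((9/40)::real)" "(1 + (11/20)) / (2) = ((31/40)::real)" "- (11/20) / (2) = (- (11/40)::real)" "(11/20) / (2) = ((11/40)::real)"
    by simp_all
  have args2: "(1 - 57/100) / 2 = ((43/200)::real)" "(1 + 57/100) / 2 = ((157/200)::real)" by simp_all
  have a: "XX (9/40) (31/40) \<ge> (1262423849/10000000000)" using XX_lb[OF _ _ atom18 atom19] by simp
  have b: "XX (- (11/40)) (11/40) \<ge> (13554237/1000000000)" using XXs_lb[OF _ _ atom20] by simp
  have c: "ee (43/200) \<le> (244288137/250000000)" using ee_ub[OF _ atom21] by simp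
  have d: "ee (157/200) \<ge> (3674163223/5000000000)" using ee_lb[OF _ atom22] by simp
  show ?thesis unfolding dt_def args args2 using a b c d by (simp add: field_simps)
qed

lemma N1: "sq2pi/5 < 4/5 * EE 0 1"
proof -
  have a: "EE 0 1 \<ge> (4278121959/5000000000)" using EE_lb[OF _ _ atom23 atom24] by simp
  show ?thesis using a sq2pi_hi by linarith
qed



abbreviation "SS \<equiv> {11/20..2::real}"

lemma mt_mono_strict: "w > 0 \<Longrightarrow> 0 \<le> t1 \<Longrightarrow> t1 < t2 \<Longrightarrow> mt w t1 < mt w t2"
proof -
  assume w: "w > 0" and t: "0 \<le> t1" "t1 < t2"
  have "EE ((1-t1)/w) ((1+t1)/w) \<le> EE ((1-t2)/w) ((1+t2)/w)"
    by (rule EE_mono) (use w t in \<open>auto intro: divide_right_mono\<close>)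
  moreover have "EE (-(t1/w)) (t1/w) < EE (-(t2/w)) (t2/w)"
    by (rule EE_sym_strict) (use w t in \<open>auto intro: divide_strict_right_mono\<close>)
  ultimately show ?thesis unfolding mt_def by simp
qed

lemma mt_mono: "w > 0 \<Longrightarrow> 0 \<le> t1 \<Longrightarrow> t1 \<le> t2 \<Longrightarrow> mt w t1 \<le> mt w t2"
  using mt_mono_strict[of w t1 t2] by (cases "t1 = t2") auto

lemma divb: "11/20 \<le> (w::real) \<Longrightarrow> \<bar>x\<bar> \<le> 3 \<Longrightarrow> -10 \<le> x/w \<and> x/w \<le> 10"
proof -
  assume w: "11/20 \<le> w" and x: "\<bar>x\<bar> \<le> 3"
  have w0: "w > 0" using w by simp
  have "x \<le> 10 * w" "-10 * w \<le> x" using w x by (auto simp: abs_le_iff)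
  thus ?thesis using w0 by (simp add: pos_divide_le_eq pos_le_divide_eq)
qed

lemma cont_EE_comp:
  assumes "continuous_on S f" "continuous_on S g" "\<And>x. x \<in> S \<Longrightarrow> -10 \<le> f x \<and> f x \<le> g x \<and> g x \<le> 10"
  shows "continuous_on S (\<lambda>x. EE (f x) (g x))"
proof -
  have "continuous_on S (\<lambda>x. PhiE (g x) - PhiE (f x))"
    by (intro continuous_on_diff continuous_on_compose2[OF cont_PhiE] assms) (use assms(3) in force)+
  thus ?thesis by (rule continuous_on_eq) (use assms(3) in \<open>auto simp: EE_Phi\<close>)
qed

lemma cont_XX_comp:
  assumes "continuous_on S f" "continuous_on S g" "\<And>x. x \<in> S \<Longrightarrow> -10 \<le> f x \<and> f x \<le> g x \<and> g x \<le> 10"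
  shows "continuous_on S (\<lambda>x. XX (f x) (g x))"
proof -
  have "continuous_on S (\<lambda>x. PhiX (g x) - PhiX (f x))"
    by (intro continuous_on_diff continuous_on_compose2[OF cont_PhiX] assms) (use assms(3) in force)+
  thus ?thesis by (rule continuous_on_eq) (use assms(3) in \<open>auto simp: XX_Phi\<close>)
qed

lemma args_ok:
  assumes "w \<in> SS" "0 \<le> t" "t \<le> 2"
  shows "-10 \<le> (1-t)/w \<and> (1-t)/w \<le> (1+t)/w \<and> (1+t)/w \<le> 10"
    and "-10 \<le> -t/w \<and> -t/w \<le> t/w \<and> t/w \<le> 10"
proof -
  have w: "w > 0" "11/20 \<le> w" using assms by auto
  have "(1-t)/w \<le> (1+t)/w" "-t/w \<le> t/w" using w assms by (auto intro: divide_right_mono)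
  moreover have "-10 \<le> (1-t)/w" "(1+t)/w \<le> 10" "-10 \<le> -t/w" "t/w \<le> 10"
    using divb[OF w(2), of "1-t"] divb[OF w(2), of "1+t"] divb[OF w(2), of "-t"] divb[OF w(2), of "t"] assms
    by auto
  ultimately show "-10 \<le> (1-t)/w \<and> (1-t)/w \<le> (1+t)/w \<and> (1+t)/w \<le> 10"
    and "-10 \<le> -t/w \<and> -t/w \<le> t/w \<and> t/w \<le> 10" by auto
qed

lemma cont_gen:
  fixes S :: "real set" and tf wf :: "real \<Rightarrow> real"
  assumes tf: "continuous_on S tf" and wf: "continuous_on S wf"
    and b: "\<And>x. x \<in> S \<Longrightarrow> wf x \<in> SS \<and> 0 \<le> tf x \<and> tf x \<le> 2"
  shows "continuous_on S (\<lambda>x. mt (wf x) (tf x))" "continuous_on S (\<lambda>x. dt (wf x) (tf x))"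
    "continuous_on S (\<lambda>x. nt (wf x) (tf x))"
proof -
  have nz: "\<And>x. x \<in> S \<Longrightarrow> wf x \<noteq> 0" using b by fastforce
  have c1: "continuous_on S (\<lambda>x. (1 - tf x) / wf x)" "continuous_on S (\<lambda>x. (1 + tf x) / wf x)"
    "continuous_on S (\<lambda>x. - tf x / wf x)" "continuous_on S (\<lambda>x. tf x / wf x)"
    using nz by (intro continuous_intros tf wf; auto)+
  have a1: "\<And>x. x \<in> S \<Longrightarrow> -10 \<le> (1 - tf x) / wf x \<and> (1 - tf x) / wf x \<le> (1 + tf x) / wf x \<and> (1 + tf x) / wf x \<le> 10"
    using args_ok(1) b by blast
  have a2: "\<And>x. x \<in> S \<Longrightarrow> -10 \<le> - tf x / wf x \<and> - tf x / wf x \<le> tf x / wf x \<and> tf x / wf x \<le> 10"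
    using args_ok(2) b by blast
  have e1: "continuous_on S (\<lambda>x. EE ((1 - tf x) / wf x) ((1 + tf x) / wf x))" by (rule cont_EE_comp[OF c1(1,2) a1])
  have e2: "continuous_on S (\<lambda>x. EE (- tf x / wf x) (tf x / wf x))" by (rule cont_EE_comp[OF c1(3,4) a2])
  have x1: "continuous_on S (\<lambda>x. XX ((1 - tf x) / wf x) ((1 + tf x) / wf x))" by (rule cont_XX_comp[OF c1(1,2) a1])
  have x2: "continuous_on S (\<lambda>x. XX (- tf x / wf x) (tf x / wf x))" by (rule cont_XX_comp[OF c1(3,4) a2])
  show "continuous_on S (\<lambda>x. mt (wf x) (tf x))" unfolding mt_def by (intro continuous_intros e1 e2)
  show "continuous_on S (\<lambda>x. dt (wf x) (tf x))" unfolding dt_def by (intro continuous_intros x1 x2)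
  show "continuous_on S (\<lambda>x. nt (wf x) (tf x))" unfolding nt_def
    by (intro continuous_intros continuous_on_compose2[OF cont_ee c1(1)] continuous_on_compose2[OF cont_ee c1(2)]) auto
qed

lemma mt_cont_t: "w \<in> SS \<Longrightarrow> continuous_on {0..2} (\<lambda>t. mt w t)"
  using cont_gen(1)[of "{0..2}" "\<lambda>t. t" "\<lambda>_. w"] by (auto intro: continuous_intros)

lemma mt_cont_w: "0 \<le> t \<Longrightarrow> t \<le> 2 \<Longrightarrow> continuous_on SS (\<lambda>w. mt w t)"
  using cont_gen(1)[of SS "\<lambda>_. t" "\<lambda>w. w"] by (auto intro: continuous_intros)

lemma mt_zero: "mt w 0 = 0"
  unfolding mt_def by (simp add: EE_empty)

lemma EE01: "w \<in> SS \<Longrightarrow> sq2pi/5 < mt w 1"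
proof -
  assume w: "w \<in> SS"
  have "EE 0 1 \<le> EE ((1-1)/w) ((1+1)/w)"
    by (rule EE_mono) (use w in \<open>auto simp: field_simps\<close>)
  thus ?thesis using N1 EE_nonneg[of "-1/w" "1/w"] unfolding mt_def by simp
qed

lemma tau_exists: "w \<in> SS \<Longrightarrow> \<exists>t. 0 < t \<and> t < 1 \<and> mt w t = sq2pi/5"
proof -
  assume w: "w \<in> SS"
  have "continuous_on {0..1} (\<lambda>t. mt w t)" by (rule continuous_on_subset[OF mt_cont_t[OF w]]) auto
  then obtain t where t: "0 \<le> t" "t \<le> 1" "mt w t = sq2pi/5"
    using IVT'[of "\<lambda>t. mt w t" 0 "sq2pi/5" 1] EE01[OF w] mt_zero[of w] sq2pi_pos by force
  have "t \<noteq> 0" using t(3) mt_zero[of w] sq2pi_pos by auto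
  moreover have "t \<noteq> 1" using t(3) EE01[OF w] by auto
  ultimately have "0 < t" "t < 1" using t by auto
  thus ?thesis using t(3) by blast
qed

lemma tau_char: "w \<in> SS \<Longrightarrow> 0 < torrent_tau w \<and> torrent_tau w < 1 \<and> mt w (torrent_tau w) = sq2pi/5"
proof -
  assume w: "w \<in> SS"
  have w0: "w > 0" using w by auto
  obtain t where t: "0 < t" "t < 1" "mt w t = sq2pi/5" using tau_exists[OF w] by blast
  have "torrent_tau w = t" unfolding torrent_tau_def
  proof (rule the_equality)
    show "0 < t \<and> measure torrent_M (torrent_event w t) = 1 - torrent_alpha"
      using t meas_eq[OF w0 t(1)] sq2pi_pos by (simp add: ta)
  next
    fix s assume s: "0 < s \<and> measure torrent_M (torrent_event w s) = 1 - torrent_alpha"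
    hence "mt w s / sq2pi = 1/5" using meas_eq[OF w0, of s] by (simp add: ta)
    hence ms: "mt w s = sq2pi/5" using sq2pi_pos by (simp add: field_simps)
    show "s = t"
    proof (rule ccontr)
      assume "s \<noteq> t"
      hence "s < t \<or> t < s" by auto
      thus False using mt_mono_strict[OF w0, of s t] mt_mono_strict[OF w0, of t s] s t ms by auto
    qed
  qed
  thus ?thesis using t by simp
qed

lemma tau_cont: "continuous_on SS torrent_tau"
  unfolding continuous_on_iff
proof (intro ballI allI impI)
  fix w0 e :: real
  assume w0: "w0 \<in> SS" and e: "0 < e"
  define t0 where "t0 = torrent_tau w0"
  have tc: "0 < t0" "t0 < 1" "mt w0 t0 = sq2pi/5" using tau_char[OF w0] unfolding t0_def by auto
  define d where "d = min e t0 / 2"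
  have d: "0 < d" "d < e" "d \<le> t0/2" using e tc unfolding d_def by auto
  have w00: "w0 > 0" using w0 by auto
  have lo: "mt w0 (t0 - d) < sq2pi/5" using mt_mono_strict[OF w00, of "t0-d" t0] d tc by auto
  have hi: "sq2pi/5 < mt w0 (t0 + d)" using mt_mono_strict[OF w00, of t0 "t0+d"] d tc by auto
  have t0m: "0 \<le> t0 - d" "t0 - d \<le> 2" "0 \<le> t0 + d" "t0 + d \<le> 2" using d tc by auto
  obtain r1 where r1: "r1 > 0" "\<And>w. w\<in>SS \<Longrightarrow> dist w w0 < r1 \<Longrightarrow> dist (mt w (t0-d)) (mt w0 (t0-d)) < sq2pi/5 - mt w0 (t0-d)"
    using mt_cont_w[OF t0m(1,2)] w0 lo unfolding continuous_on_iff by (metis diff_gt_0_iff_gt)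
  obtain r2 where r2: "r2 > 0" "\<And>w. w\<in>SS \<Longrightarrow> dist w w0 < r2 \<Longrightarrow> dist (mt w (t0+d)) (mt w0 (t0+d)) < mt w0 (t0+d) - sq2pi/5"
    using mt_cont_w[OF t0m(3,4)] w0 hi unfolding continuous_on_iff by (metis diff_gt_0_iff_gt)
  show "\<exists>d>0. \<forall>w\<in>SS. dist w w0 < d \<longrightarrow> dist (torrent_tau w) (torrent_tau w0) < e"
  proof (intro exI[of _ "min r1 r2"] conjI ballI impI)
    show "0 < min r1 r2" using r1 r2 by simp
    fix w assume w: "w \<in> SS" and dw: "dist w w0 < min r1 r2"
    have wp: "w > 0" using w by auto
    have A: "mt w (t0-d) < sq2pi/5" using r1(2)[OF w] dw by (auto simp: dist_real_def)
    have B: "sq2pi/5 < mt w (t0+d)" using r2(2)[OF w] dw by (auto simp: dist_real_def)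
    have tw: "0 < torrent_tau w" "mt w (torrent_tau w) = sq2pi/5" using tau_char[OF w] by auto
    have "\<not> torrent_tau w \<le> t0 - d" using mt_mono[OF wp, of "torrent_tau w" "t0-d"] tw A by auto
    moreover have "\<not> t0 + d \<le> torrent_tau w" using mt_mono[OF wp, of "t0+d" "torrent_tau w"] tw B t0m by auto
    ultimately show "dist (torrent_tau w) (torrent_tau w0) < e" using d unfolding t0_def[symmetric] dist_real_def by auto
  qed
qed


lemma XX_lower: "0 \<le> a \<Longrightarrow> a \<le> b \<Longrightarrow> (b - a) * (a^2 * ee b) \<le> XX a b"
proof -
  assume a: "0 \<le> a" "a \<le> b"
  have "((\<lambda>x. a^2 * ee b) has_integral ((b - a) * (a^2 * ee b))) {a..b}"
    using has_integral_const_real[of "a^2 * ee b" a b] a by simp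
  moreover have "((\<lambda>x. x^2 * ee x) has_integral XX a b) {a..b}" unfolding XX_def by (rule xee_int)
  ultimately show ?thesis
  proof (rule has_integral_le)
    fix x assume x: "x \<in> {a..b}"
    show "a^2 * ee b \<le> x^2 * ee x"
      by (rule mult_mono) (use a x in \<open>auto intro: power_mono ee_dec less_imp_le[OF ee_pos]\<close>)
  qed
qed

lemma dt_pos: "w > 0 \<Longrightarrow> t > 0 \<Longrightarrow> dt w t > 0"
proof -
  assume w: "w > 0" and t: "t > 0"
  define s where "s = t / w"
  have s: "s > 0" unfolding s_def using w t by simp
  have "0 < (s - s/2) * ((s/2)^2 * ee s)" using s ee_pos[of s] by simp
  also have "\<dots> \<le> XX (s/2) s" by (rule XX_lower) (use s in auto)
  also have "\<dots> \<le> XX (-s) s" by (rule XX_mono) (use s in auto)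
  finally have "0 < XX (-(t/w)) (t/w)" unfolding s_def .
  thus ?thesis unfolding dt_def using XX_nonneg[of "(1-t)/w" "(1+t)/w"] by simp
qed

lemma F_eq: "w \<in> SS \<Longrightarrow> torrent_F w = nt w (torrent_tau w) / dt w (torrent_tau w)"
proof -
  assume w: "w \<in> SS"
  have w0: "w > 0" using w by auto
  have t: "torrent_tau w > 0" using tau_char[OF w] by auto
  show ?thesis unfolding torrent_F_def torrent_A_def num_eq[OF w0 t] den_eq[OF w0 t]
    using sq2pi_pos by simp
qed

lemma H_cont: "continuous_on SS (\<lambda>w. nt w (torrent_tau w) / dt w (torrent_tau w) - w)"
proof -
  have b: "\<And>x. x \<in> SS \<Longrightarrow> x \<in> SS \<and> 0 \<le> torrent_tau x \<and> torrent_tau x \<le> 2"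
    using tau_char by fastforce
  have c1: "continuous_on SS (\<lambda>w. nt w (torrent_tau w))" "continuous_on SS (\<lambda>w. dt w (torrent_tau w))"
    using cont_gen(2,3)[OF tau_cont continuous_on_id b] by auto
  have nz: "\<And>w. w \<in> SS \<Longrightarrow> dt w (torrent_tau w) \<noteq> 0"
  proof -
    fix w assume w: "w \<in> SS"
    have "dt w (torrent_tau w) > 0" by (rule dt_pos) (use w tau_char[OF w] in auto)
    thus "dt w (torrent_tau w) \<noteq> 0" by simp
  qed
  show ?thesis by (intro continuous_intros c1) (use nz in blast)
qed

lemma nt_lower: "w > 0 \<Longrightarrow> 0 \<le> t1 \<Longrightarrow> t1 \<le> t \<Longrightarrow> t \<le> 1 \<Longrightarrow> 4/5 * (ee ((1-t1)/w) - ee ((1+t1)/w)) \<le> nt w t"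
proof -
  assume h: "w > 0" "0 \<le> t1" "t1 \<le> t" "t \<le> 1"
  have "ee ((1-t1)/w) \<le> ee ((1-t)/w)" by (rule ee_dec) (use h in \<open>auto intro: divide_right_mono\<close>)
  moreover have "ee ((1+t)/w) \<le> ee ((1+t1)/w)" by (rule ee_dec) (use h in \<open>auto intro: divide_right_mono\<close>)
  ultimately show ?thesis unfolding nt_def by simp
qed

lemma nt_upper: "w > 0 \<Longrightarrow> 0 \<le> t \<Longrightarrow> t \<le> t2 \<Longrightarrow> t2 \<le> 1 \<Longrightarrow> nt w t \<le> 4/5 * (ee ((1-t2)/w) - ee ((1+t2)/w))"
proof -
  assume h: "w > 0" "0 \<le> t" "t \<le> t2" "t2 \<le> 1"
  have "ee ((1-t)/w) \<le> ee ((1-t2)/w)" by (rule ee_dec) (use h in \<open>auto intro: divide_right_mono\<close>)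
  moreover have "ee ((1+t2)/w) \<le> ee ((1+t)/w)" by (rule ee_dec) (use h in \<open>auto intro: divide_right_mono\<close>)
  ultimately show ?thesis unfolding nt_def by simp
qed

lemma dt_mono: "w > 0 \<Longrightarrow> 0 \<le> t1 \<Longrightarrow> t1 \<le> t2 \<Longrightarrow> dt w t1 \<le> dt w t2"
proof -
  assume h: "w > 0" "0 \<le> t1" "t1 \<le> t2"
  have "XX ((1-t1)/w) ((1+t1)/w) \<le> XX ((1-t2)/w) ((1+t2)/w)" by (rule XX_mono) (use h in \<open>auto intro: divide_right_mono\<close>)
  moreover have "XX (-t1/w) (t1/w) \<le> XX (-t2/w) (t2/w)" by (rule XX_mono) (use h in \<open>auto intro: divide_right_mono\<close>)
  ultimately show ?thesis unfolding dt_def by simp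
qed

lemma tau_bracket:
  assumes w: "w \<in> SS" and t1: "0 \<le> t1" "mt w t1 < sq2pi/5" and t2: "0 \<le> t2" "sq2pi/5 < mt w t2"
  shows "t1 < torrent_tau w" "torrent_tau w < t2"
proof -
  have w0: "w > 0" using w by auto
  have tc: "0 < torrent_tau w" "mt w (torrent_tau w) = sq2pi/5" using tau_char[OF w] by auto
  show "t1 < torrent_tau w"
  proof (rule ccontr)
    assume "\<not> t1 < torrent_tau w"
    hence "mt w (torrent_tau w) \<le> mt w t1" using mt_mono[OF w0, of "torrent_tau w" t1] tc by auto
    thus False using tc t1 by simp
  qed
  show "torrent_tau w < t2"
  proof (rule ccontr)
    assume "\<not> torrent_tau w < t2"
    hence "mt w t2 \<le> mt w (torrent_tau w)" using mt_mono[OF w0, of t2 "torrent_tau w"] t2(1) by auto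
    thus False using tc t2 by simp
  qed
qed

lemma H_a: "nt (11/20) (torrent_tau (11/20)) / dt (11/20) (torrent_tau (11/20)) - 11/20 > 0"
proof -
  let ?w = "11/20::real"
  let ?t = "torrent_tau ?w"
  have w: "?w \<in> SS" by simp
  have br: "373/1000 < ?t" "?t < 383/1000" using tau_bracket[OF w _ NA1 _ NA2] by auto
  have tc: "?t < 1" using tau_char[OF w] by auto
  have dp: "dt ?w ?t > 0" by (rule dt_pos) (use br in auto)
  have "?w * dt ?w ?t \<le> ?w * dt ?w (383/1000)" using dt_mono[of ?w ?t "383/1000"] br by auto
  also have "\<dots> < 4/5 * (ee ((1 - 373/1000)/?w) - ee ((1 + 373/1000)/?w))" by (rule NA3)
  also have "\<dots> \<le> nt ?w ?t" by (rule nt_lower) (use br tc in auto)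
  finally have "?w * dt ?w ?t < nt ?w ?t" .
  hence "?w < nt ?w ?t / dt ?w ?t" using dp by (simp add: field_simps)
  thus ?thesis by simp
qed

lemma H_c: "nt 2 (torrent_tau 2) / dt 2 (torrent_tau 2) - 2 < 0"
proof -
  let ?t = "torrent_tau 2"
  have w: "(2::real) \<in> SS" by simp
  have br: "11/20 < ?t" "?t < 57/100" using tau_bracket[OF w _ NC1 _ NC2] by auto
  have dp: "dt 2 ?t > 0" by (rule dt_pos) (use br in auto)
  have "nt 2 ?t \<le> 4/5 * (ee ((1 - 57/100)/2) - ee ((1 + 57/100)/2))" by (rule nt_upper) (use br in auto)
  also have "\<dots> < 2 * dt 2 (11/20)" by (rule NC3)
  also have "\<dots> \<le> 2 * dt 2 ?t" using dt_mono[of 2 "11/20" ?t] br by auto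
  finally have "nt 2 ?t < 2 * dt 2 ?t" .
  hence "nt 2 ?t / dt 2 ?t < 2" using dp by (simp add: field_simps)
  thus ?thesis by simp
qed

theorem mainTheorem12:
  shows "\<exists>w::real. w > 1/2 \<and> torrent_F w = w"
proof -
  obtain w where w: "11/20 \<le> w" "w \<le> 2" "nt w (torrent_tau w) / dt w (torrent_tau w) - w = 0"
    using IVT2'[where f="\<lambda>w. nt w (torrent_tau w) / dt w (torrent_tau w) - w" and a="11/20" and y=0 and b=2] H_cont H_a H_c
    by force
  have "w \<in> SS" using w by auto
  hence "torrent_F w = w" using F_eq w(3) by simp
  moreover have "w > 1/2" using w by simp
  ultimately show ?thesis by blast
qed


end
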